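(* Let $(V,L,\varphi,E)$ be a valuation system. Let $K$ be a sublattice of $V$ with $L$ a sublattice of $K$, and let $\psi:K\to E$ be a valuation which extends $\varphi$. Suppose $\psi$ is $\Pi$-extendible. Then $\varphi$ is $\Pi$-extendible and $\Pi\psi$ extends $\Pi\varphi$.
   Context: A valuation system $(V,L,\varphi,E)$ consists of: (i) a lattice $V$ which is $\sigma$-distributive, i.e. for every $a\in V$ and every sequence $(b_n)$ in $V$ whose infimum exists, $\bigwedge_n(a\vee b_n)$ exists and equals $a\vee\bigwedge_n b_n$, and dually for suprema; (ii) a sublattice $L$ of $V$; (iii) a partially ordered abelian group $E$ which is R-complete: whenever $x_1\ge x_2\ge\cdots$ and $y_1\ge y_2\ge\cdots$ in $E$ are such that $\bigwedge_n(x_n+y_n)$ exists, then $\bigwedge_n x_n$ and $\bigwedge_n y_n$ exist, and dually for increasing sequences and suprema; (iv) a valuation $\varphi:L\to E$, i.e. an order-preserving map with $\varphi(a\wedge b)+\varphi(a\vee b)=\varphi(a)+\varphi(b)$. A map $\psi:C\to E$ extends $\varphi:L\to E$ if $L\subseteq C$ and $\psi|_L=\varphi$. A decreasing sequence $a_1\ge a_2\ge\cdots$ in $L$ is $\varphi$-convergent if $\bigwedge_n a_n$ exists in $V$ and $\bigwedge_n\varphi(a_n)$ exists in $E$. Let $\Pi L:=\{\bigwedge_n a_n: (a_n)\text{ a }\varphi\text{-convergent decreasing sequence in }L\}$ (a sublattice of $V$). $\varphi$ is $\Pi$-extendible if there is a valuation $\Pi\varphi:\Pi L\to E$ with $\Pi\varphi(\bigwedge_n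 a_n)=\bigwedge_n\varphi(a_n)$ for every $\varphi$-convergent decreasing sequence $(a_n)$ in $L$; the same notions apply to $\psi$ on $K$. *)

theory Defs
  imports Main
begin

definition is_inf_of :: "'a::order set \<Rightarrow> 'a \<Rightarrow> bool" where
  "is_inf_of S x \<longleftrightarrow> (\<forall>s\<in>S. x \<le> s) \<and> (\<forall>y. (\<forall>s\<in>S. y \<le> s) \<longrightarrow> y \<le> x)"

definition is_sup_of :: "'a::order set \<Rightarrow> 'a \<Rightarrow> bool" where
  "is_sup_of S x \<longleftrightarrow> (\<forall>s\<in>S. s \<le> x) \<and> (\<forall>y. (\<forall>s\<in>S. s \<le> y) \<longrightarrow> x \<le> y)"

definition sigma_distributive :: "'v::lattice itself \<Rightarrow> bool" where
  "sigma_distributive _ \<longleftrightarrow>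
     (\<forall>(a::'v) (b::nat\<Rightarrow>'v) c. is_inf_of (range b) c \<longrightarrow> is_inf_of (range (\<lambda>n. sup a (b n))) (sup a c)) \<and>
     (\<forall>(a::'v) (b::nat\<Rightarrow>'v) c. is_sup_of (range b) c \<longrightarrow> is_sup_of (range (\<lambda>n. inf a (b n))) (inf a c))"

definition R_complete :: "'e::ordered_ab_group_add itself \<Rightarrow> bool" where
  "R_complete _ \<longleftrightarrow>
     (\<forall>(x::nat\<Rightarrow>'e) y. antimono x \<longrightarrow> antimono y \<longrightarrow> (\<exists>z. is_inf_of (range (\<lambda>n. x n + y n)) z) \<longrightarrow>
        (\<exists>u. is_inf_of (range x) u) \<and> (\<exists>v. is_inf_of (range y) v)) \<and>
     (\<forall>(x::nat\<Rightarrow>'e) y. mono x \<longrightarrow> mono y \<longrightarrow> (\<exists>z. is_sup_of (range (\<lambda>n. x n + y n)) z) \<longrightarrow>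
        (\<exists>u. is_sup_of (range x) u) \<and> (\<exists>v. is_sup_of (range y) v))"

definition sublattice :: "'v::lattice set \<Rightarrow> bool" where
  "sublattice L \<longleftrightarrow> (\<forall>a\<in>L. \<forall>b\<in>L. inf a b \<in> L \<and> sup a b \<in> L)"

definition valuation_on :: "'v::lattice set \<Rightarrow> ('v \<Rightarrow> 'e::ordered_ab_group_add) \<Rightarrow> bool" where
  "valuation_on C f \<longleftrightarrow> mono_on C f \<and>
     (\<forall>a\<in>C. \<forall>b\<in>C. f (inf a b) + f (sup a b) = f a + f b)"

definition phi_convergent :: "'v::lattice set \<Rightarrow> ('v \<Rightarrow> 'e::ordered_ab_group_add) \<Rightarrow> (nat \<Rightarrow> 'v) \<Rightarrow> bool" where
  "phi_convergent L \<phi> a \<longleftrightarrow> (\<forall>n. a n \<in> L) \<and> antimono a \<and>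
     (\<exists>x. is_inf_of (range a) x) \<and> (\<exists>y. is_inf_of (range (\<lambda>n. \<phi> (a n))) y)"

definition Pi_set :: "'v::lattice set \<Rightarrow> ('v \<Rightarrow> 'e::ordered_ab_group_add) \<Rightarrow> 'v set" where
  "Pi_set L \<phi> = {x. \<exists>a. phi_convergent L \<phi> a \<and> is_inf_of (range a) x}"

definition Pi_extension :: "'v::lattice set \<Rightarrow> ('v \<Rightarrow> 'e::ordered_ab_group_add) \<Rightarrow> ('v \<Rightarrow> 'e) \<Rightarrow> bool" where
  "Pi_extension L \<phi> f \<longleftrightarrow> valuation_on (Pi_set L \<phi>) f \<and>
     (\<forall>a x y. phi_convergent L \<phi> a \<longrightarrow> is_inf_of (range a) x \<longrightarrow>
        is_inf_of (range (\<lambda>n. \<phi> (a n))) y \<longrightarrow> f x = y)"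

definition Pi_extendible :: "'v::lattice set \<Rightarrow> ('v \<Rightarrow> 'e::ordered_ab_group_add) \<Rightarrow> bool" where
  "Pi_extendible L \<phi> \<longleftrightarrow> (\<exists>f. Pi_extension L \<phi> f)"

end

theory Submission
  imports Defs
begin

theorem lemma5p6:
  fixes L K :: "'v::lattice set"
    and \<phi> \<psi> \<Psi> :: "'v \<Rightarrow> 'e::ordered_ab_group_add"
  assumes "sigma_distributive TYPE('v)"
    and "R_complete TYPE('e)"
    and "sublattice L"
    and "valuation_on L \<phi>"
    and "sublattice K"
    and "L \<subseteq> K"
    and "valuation_on K \<psi>"
    and "\<forall>x\<in>L. \<psi> x = \<phi> x"
    and "Pi_extension K \<psi> \<Psi>"
  shows "Pi_extendible L \<phi> \<and> Pi_set L \<phi> \<subseteq> Pi_set K \<psi> \<and>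
         (\<forall>f. Pi_extension L \<phi> f \<longrightarrow> (\<forall>x\<in>Pi_set L \<phi>. \<Psi> x = f x))"
proof -
  have conv: "phi_convergent K \<psi> a" if "phi_convergent L \<phi> a" for a
  proof -
    have e: "(\<lambda>n. \<psi> (a n)) = (\<lambda>n. \<phi> (a n))"
      using that assms(8) unfolding phi_convergent_def by auto
    show ?thesis using that assms(6) unfolding phi_convergent_def e by auto
  qed
  have lim: "\<Psi> x = y" if "phi_convergent L \<phi> a" "is_inf_of (range a) x"
      "is_inf_of (range (\<lambda>n. \<phi> (a n))) y" for a x y
  proof -
    have e: "(\<lambda>n. \<psi> (a n)) = (\<lambda>n. \<phi> (a n))"
      using that assms(8) unfolding phi_convergent_def by auto
    have "is_inf_of (range (\<lambda>n. \<psi> (a n))) y" unfolding e by (rule that(3))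
    then show ?thesis using assms(9) conv[OF that(1)] that(2) unfolding Pi_extension_def by blast
  qed
  have sub: "Pi_set L \<phi> \<subseteq> Pi_set K \<psi>"
    unfolding Pi_set_def using conv by blast
  have val: "valuation_on (Pi_set L \<phi>) \<Psi>"
    using assms(9) sub unfolding Pi_extension_def valuation_on_def
    by (meson mono_on_subset subsetD)
  have ext: "Pi_extension L \<phi> \<Psi>"
    unfolding Pi_extension_def using val lim by blast
  have uniq: "\<forall>f. Pi_extension L \<phi> f \<longrightarrow> (\<forall>x\<in>Pi_set L \<phi>. \<Psi> x = f x)"
  proof (intro allI impI ballI)
    fix f x assume f: "Pi_extension L \<phi> f" and x: "x \<in> Pi_set L \<phi>"
    then obtain a where a: "phi_convergent L \<phi> a" "is_inf_of (range a) x"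
      unfolding Pi_set_def by blast
    then obtain y where y: "is_inf_of (range (\<lambda>n. \<phi> (a n))) y"
      unfolding phi_convergent_def by blast
    have "f x = y" using f a y unfolding Pi_extension_def by blast
    moreover have "\<Psi> x = y" using lim a y by blast
    ultimately show "\<Psi> x = f x" by simp
  qed
  show ?thesis using ext sub uniq unfolding Pi_extendible_def by blast
qed

end
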